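(* Let $\lambda>0$, ${\rm T}>0$, $\mu>0$, $\sigma^2\ge 0$, $\alpha>2$ and $0<a\le 1$. For $\gamma_1\in(0,a)$ put $\gamma_2=a-\gamma_1$ and $$\mathrm{DSR}(\gamma_1)=\lambda\gamma_2\,p_{\rm cov}({\rm T},\lambda\gamma_1,\alpha).$$ If $\gamma_1^*\in(0,a)$ is a point at which $\mathrm{DSR}$ attains its maximum over $(0,a)$, then $\gamma_1^*<a/2<\gamma_2^*=a-\gamma_1^*< a\le 1$.
   Context: For $x>0$ the coverage probability is $$p_{\rm cov}({\rm T},x,\alpha)=\pi x\int_0^\infty e^{-\pi x r\,\beta({\rm T},\alpha)-\mu{\rm T}\sigma^2 r^{\alpha/2}}\,dr,$$ where $$\beta({\rm T},\alpha)=\frac{2(\mu{\rm T})^{2/\alpha}}{\alpha}\,\mathbb{E}\Big[g^{2/\alpha}\big(\Gamma(-2/\alpha,\mu{\rm T}g)-\Gamma(-2/\alpha)\big)\Big]>0,$$ with $g$ exponentially distributed with rate $\mu$ and $\Gamma(\cdot,\cdot)$ the upper incomplete Gamma function. This is the SINR coverage probability of a typical receiver served by its nearest transmitter when the transmitters form a homogeneous Poisson point process of intensity $x$, with Rayleigh fading, path loss exponent $\alpha$, transmit power $1/\mu$ and noise power $\sigma^2$. In the single-file model, the users form a homogeneous PPP of intensity $\lambda$. Independently, each user is a transmitter (fraction $\gamma_1$) or a receiver (fraction $\gamma_2$), with $\gamma_1+\gamma_2=a$. $\mathrm{DSR}$ denotes the density of successful receptions. *)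

theory Defs
  imports "HOL-Analysis.Analysis"
begin

definition upper_inc_Gamma :: "real \<Rightarrow> real \<Rightarrow> real" where
  "upper_inc_Gamma s x = (LINT t:{x..}|lborel. t powr (s - 1) * exp (- t))"

text \<open>beta(T, alpha) for g exponentially distributed with rate mu (expectation written
  as integral against the density mu e^(-mu g) on [0,oo)).\<close>
definition beta_fn :: "real \<Rightarrow> real \<Rightarrow> real \<Rightarrow> real" where
  "beta_fn mu T alpha =
     2 * (mu * T) powr (2 / alpha) / alpha *
     (LINT g:{0<..}|lborel. mu * exp (- mu * g) *
        (g powr (2 / alpha) *
          (upper_inc_Gamma (- 2 / alpha) (mu * T * g) - Gamma (- 2 / alpha))))"

definition p_cov :: "real \<Rightarrow> real \<Rightarrow> real \<Rightarrow> real \<Rightarrow> real \<Rightarrow> real" where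
  "p_cov mu sigma2 T x alpha =
     pi * x * (LINT r:{0..}|lborel.
        exp (- pi * x * r * beta_fn mu T alpha - mu * T * sigma2 * r powr (alpha / 2)))"

definition DSR :: "real \<Rightarrow> real \<Rightarrow> real \<Rightarrow> real \<Rightarrow> real \<Rightarrow> real \<Rightarrow> real \<Rightarrow> real" where
  "DSR lam mu sigma2 T alpha a g1 = lam * (a - g1) * p_cov mu sigma2 T (lam * g1) alpha"

end

theory Submission
  imports Defs
begin

lemma hk_to_lborel:
  fixes f :: "real \<Rightarrow> real"
  assumes "f integrable_on S" "\<And>x. x \<in> S \<Longrightarrow> 0 \<le> f x" "S \<in> sets borel"
    "f \<in> borel_measurable borel"
  shows "set_integrable lborel S f"
proof -
  have "f absolutely_integrable_on S" by (rule nonnegative_absolutely_integrable_1) (use assms in auto)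
  then have "integrable lebesgue (\<lambda>x. indicator S x *\<^sub>R f x)" by (simp add: set_integrable_def)
  moreover have "(\<lambda>x. indicator S x *\<^sub>R f x) \<in> borel_measurable lborel"
    using assms(3,4) by measurable
  ultimately show ?thesis unfolding set_integrable_def using integrable_completion by blast
qed

lemma exp_int:
  fixes k c :: real assumes "k > 0"
  shows "set_integrable lborel {c..} (\<lambda>r. exp (- k * r))"
  by (rule hk_to_lborel) (use integrable_on_exp_minus_to_infinity[OF assms] in auto)

lemma powr_has_int:
  fixes x s :: real assumes "x > 0" "s < 0"
  shows "((\<lambda>t. t powr (s - 1)) has_integral (x powr s / (-s))) {x..}"
proof (rule has_integral_to_inf)
  fix y
  show "(\<lambda>t. t powr (s - 1)) integrable_on {x..y}"
    using assms by (intro integrable_continuous_interval continuous_on_powr') auto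
next
  have d: "((\<lambda>t. t powr s / s) has_vector_derivative t powr (s - 1)) (at t within {x..y})"
    if "t \<ge> x" for t y
  proof -
    have "t > 0" using that assms by linarith
    then have "((\<lambda>t. t powr s) has_real_derivative s * t powr (s - 1)) (at t)"
      by (rule has_real_derivative_powr)
    then have "((\<lambda>t. t powr s / s) has_real_derivative s * t powr (s - 1) / s) (at t)"
      by (rule DERIV_cdivide)
    then have "((\<lambda>t. t powr s / s) has_real_derivative t powr (s - 1)) (at t)"
      using assms by simp
    then show ?thesis
      by (simp add: has_real_derivative_iff_has_vector_derivative has_vector_derivative_at_within)
  qed
  have "((\<lambda>t. t powr (s - 1)) has_integral (y powr s / s - x powr s / s)) {x..y}" if "y \<ge> x" for y
    using that by (intro fundamental_theorem_of_calculus d) auto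
  then have ev: "\<forall>\<^sub>F y in at_top. y powr s / s - x powr s / s = integral {x..y} (\<lambda>t. t powr (s - 1))"
    unfolding eventually_at_top_linorder by (metis integral_unique)
  have "((\<lambda>y. y powr s / s - x powr s / s) \<longlongrightarrow> 0 / s - x powr s / s) at_top"
    by (intro tendsto_intros tendsto_neg_powr assms filterlim_ident) (use assms in simp)
  then have "((\<lambda>y. y powr s / s - x powr s / s) \<longlongrightarrow> x powr s / - s) at_top"
    by simp
  then show "((\<lambda>y. integral {x..y} (\<lambda>t. t powr (s - 1))) \<longlongrightarrow> x powr s / - s) at_top"
    using ev by (rule Lim_transform_eventually)
qed auto

lemma U_nonneg: "upper_inc_Gamma s x \<ge> 0"
  unfolding upper_inc_Gamma_def set_lebesgue_integral_def
  by (intro integral_nonneg_AE AE_I2) (auto simp: indicator_def)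

lemma U_le:
  fixes x s :: real assumes "x > 0" "s < 0"
  shows "upper_inc_Gamma s x \<le> x powr s / (-s)"
proof -
  have i1: "set_integrable lborel {x..} (\<lambda>t. t powr (s - 1))"
    by (rule hk_to_lborel) (use powr_has_int[OF assms] in auto)
  have v: "(LINT t:{x..}|lborel. t powr (s - 1)) = x powr s / (-s)"
    using set_borel_integral_eq_integral(2)[OF i1] powr_has_int[OF assms] by (simp add: integral_unique)
  have le: "t powr (s - 1) * exp (- t) \<le> t powr (s - 1)" if "t \<in> {x..}" for t
  proof -
    have t: "t > 0" using that assms by auto
    have "t powr (s - 1) * exp (- t) \<le> t powr (s - 1) * 1"
      using t by (intro mult_left_mono) auto
    then show ?thesis by simp
  qed
  have i2: "set_integrable lborel {x..} (\<lambda>t. t powr (s - 1) * exp (- t))"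
  proof (rule set_integrable_bound[OF i1])
    show "set_borel_measurable lborel {x..} (\<lambda>t. t powr (s - 1) * exp (- t))"
      unfolding set_borel_measurable_def by measurable
    show "AE t in lborel. t \<in> {x..} \<longrightarrow> norm (t powr (s - 1) * exp (- t)) \<le> norm (t powr (s - 1))"
      using le by (intro AE_I2 impI) (simp add: abs_mult)
  qed
  have "upper_inc_Gamma s x \<le> (LINT t:{x..}|lborel. t powr (s - 1))"
    unfolding upper_inc_Gamma_def
    by (rule set_integral_mono[OF i2 i1 le])
  then show ?thesis using v by simp
qed

lemma Gamma_neg: fixes s :: real assumes "-1 < s" "s < 0" shows "Gamma s < 0"
proof -
  have "s \<notin> \<int>\<^sub>\<le>\<^sub>0" using assms by (auto elim!: nonpos_Ints_cases)
  then have "Gamma (s + 1) = s * Gamma s" by (rule Gamma_plus1)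
  moreover have "Gamma (s + 1) > 0" using assms by auto
  ultimately show ?thesis using assms by (metis mult_neg_pos not_less_iff_gr_or_eq zero_less_mult_iff)
qed

lemma integral_pos:
  fixes f :: "real \<Rightarrow> real"
  assumes "set_integrable lborel A f" "A \<in> sets borel" "\<And>x. x \<in> A \<Longrightarrow> f x \<ge> 0"
    "{1..2} \<subseteq> A" "\<And>x. x \<in> {1..2} \<Longrightarrow> f x > 0"
  shows "(LINT x:A|lborel. f x) > 0"
proof -
  let ?g = "\<lambda>x. indicator A x *\<^sub>R f x"
  have int: "integrable lborel ?g" using assms(1) by (simp add: set_integrable_def)
  have nn: "AE x in lborel. 0 \<le> ?g x" using assms(3) by (intro AE_I2) (auto simp: indicator_def)
  have ge: "integral\<^sup>L lborel ?g \<ge> 0" using nn by (rule integral_nonneg_AE)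
  have "integral\<^sup>L lborel ?g \<noteq> 0"
  proof
    assume "integral\<^sup>L lborel ?g = 0"
    then have "AE x in lborel. ?g x = 0" using integral_nonneg_eq_0_iff_AE[OF int nn] by simp
    then have "AE x in lborel. x \<notin> {1..2::real}"
      by (rule AE_mp) (intro AE_I2, use assms(4,5) in \<open>auto simp: indicator_def\<close>, fastforce)
    then have "emeasure lborel {1..2::real} = 0"
      by (subst (asm) AE_iff_measurable[of "{1..2}"]) auto
    then show False by simp
  qed
  then show ?thesis using ge unfolding set_lebesgue_integral_def by simp
qed


lemma meas_U: "(\<lambda>g. upper_inc_Gamma s (c*g)) \<in> borel_measurable borel"
  unfolding upper_inc_Gamma_def set_lebesgue_integral_def
proof (rule lborel.borel_measurable_lebesgue_integral)
  have e: "sets (borel \<Otimes>\<^sub>M lborel) = sets (borel \<Otimes>\<^sub>M (borel::real measure))"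
    by (rule sets_pair_measure_cong) auto
  have 1: "(\<lambda>x::real\<times>real. snd x powr (s - 1) * exp (- snd x)) \<in> borel_measurable (borel \<Otimes>\<^sub>M borel)"
    by (intro borel_measurable_times; measurable)
  have 2: "Measurable.pred (borel \<Otimes>\<^sub>M borel) (\<lambda>x::real\<times>real. c * fst x \<le> snd x)" by measurable
  have "(\<lambda>x::real\<times>real. indicator {c * fst x..} (snd x) *\<^sub>R (snd x powr (s - 1) * exp (- snd x))) \<in> borel_measurable (borel \<Otimes>\<^sub>M borel)"
    unfolding indicator_def atLeast_iff using 1 2 by measurable
  then show "(\<lambda>(x, t). indicat_real {c * x..} t *\<^sub>R (t powr (s - 1) * exp (- t))) \<in> borel_measurable (borel \<Otimes>\<^sub>M lborel)"
    using measurable_cong_sets[OF e refl] by (simp add: split_beta')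
qed

lemma xexp_le:
  fixes k g :: real assumes "k > 0" "g \<ge> 0"
  shows "g * exp (- k * g) \<le> (2 / k) * exp (- (k / 2) * g)"
proof -
  have "1 + k * g / 2 \<le> exp (k * g / 2)" by (rule exp_ge_add_one_self)
  then have "g \<le> (2 / k) * exp (k * g / 2)" using assms by (simp add: field_simps)
  then have "g * exp (- k * g) \<le> (2 / k) * exp (k * g / 2) * exp (- k * g)"
    by (intro mult_right_mono) auto
  also have "\<dots> = (2 / k) * exp (- (k / 2) * g)"
    by (simp add: mult.assoc exp_add[symmetric])
  finally show ?thesis .
qed

lemma powq_le:
  fixes q g :: real assumes "0 < q" "q \<le> 1" "g \<ge> 0"
  shows "g powr q \<le> 1 + g"
proof (cases "g \<le> 1")
  case True
  then have "g powr q \<le> 1" using assms by (intro powr_le1) auto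
  then show ?thesis using assms by simp
next
  case False
  then have "g powr q \<le> g powr 1" using assms by (intro powr_mono) auto
  then show ?thesis using False by simp
qed

lemma beta_pos:
  fixes mu T alpha :: real assumes "mu > 0" "T > 0" "alpha > 2"
  shows "beta_fn mu T alpha > 0"
proof -
  define s where "s = - 2 / alpha"
  define q where "q = 2 / alpha"
  have s: "-1 < s" "s < 0" using assms by (auto simp: s_def field_simps)
  have q: "0 < q" "q \<le> 1" "q = - s" using assms by (auto simp: q_def s_def field_simps)
  define G where "G = - Gamma s"
  have G: "G > 0" using Gamma_neg[OF s] by (simp add: G_def)
  define C1 where "C1 = (mu * T) powr s / (- s)"
  have C1: "C1 \<ge> 0" unfolding C1_def by (rule divide_nonneg_pos) (use s in auto)
  define F where "F = (\<lambda>g. mu * exp (- mu * g) *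
        (g powr (2 / alpha) * (upper_inc_Gamma (- 2 / alpha) (mu * T * g) - Gamma (- 2 / alpha))))"
  have Fq: "F g = mu * exp (- mu * g) * (g powr q * (upper_inc_Gamma s (mu * T * g) + G))" for g
    by (simp add: F_def q_def s_def G_def)
  define D where "D = mu * (C1 + G) + 2 * G"
  have lower: "F g \<ge> mu * exp (- mu * g) * (g powr q * G)" if "g > 0" for g
    unfolding Fq using U_nonneg[of s "mu * T * g"] assms G that
    by (intro mult_left_mono) (auto intro!: mult_left_mono)
  have Fpos: "F g > 0" if "g > 0" for g
  proof -
    have "mu * exp (- mu * g) * (g powr q * G) > 0" using that assms G by simp
    then show ?thesis using lower[OF that] by linarith
  qed
  have upper: "F g \<le> D * exp (- (mu / 2) * g)" if "g > 0" for g
  proof -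
    have "g powr q * upper_inc_Gamma s (mu * T * g) \<le> g powr q * ((mu * T * g) powr s / (- s))"
      using U_le[of "mu * T * g" s] that assms s by (intro mult_left_mono) auto
    also have "\<dots> = (g powr q * g powr s) * C1"
      using that assms by (simp add: C1_def powr_mult)
    also have "g powr q * g powr s = 1"
      using that q by (simp add: powr_add[symmetric])
    finally have u: "g powr q * upper_inc_Gamma s (mu * T * g) \<le> C1" by simp
    have "g powr q * G \<le> (1 + g) * G" using powq_le[OF q(1,2)] that G
      by (intro mult_right_mono) auto
    then have "g powr q * (upper_inc_Gamma s (mu * T * g) + G) \<le> C1 + G + G * g"
      using u by (simp add: algebra_simps)
    then have "F g \<le> mu * exp (- mu * g) * (C1 + G + G * g)"
      unfolding Fq using assms by (intro mult_left_mono) auto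
    also have "\<dots> = mu * (C1 + G) * exp (- mu * g) + mu * G * (g * exp (- mu * g))"
      by (simp add: algebra_simps)
    also have "\<dots> \<le> mu * (C1 + G) * exp (- (mu / 2) * g) + mu * G * ((2 / mu) * exp (- (mu / 2) * g))"
    proof (intro add_mono mult_left_mono)
      show "exp (- mu * g) \<le> exp (- (mu / 2) * g)" using assms that by simp
      show "g * exp (- mu * g) \<le> 2 / mu * exp (- (mu / 2) * g)" using xexp_le[OF assms(1)] that by simp
    qed (use assms G C1 in auto)
    also have "\<dots> = D * exp (- (mu / 2) * g)"
      using assms by (simp add: D_def algebra_simps)
    finally show ?thesis .
  qed
  have mF: "F \<in> borel_measurable borel"
    unfolding F_def using meas_U[of "- 2 / alpha" "mu * T"] by measurable
  have ib: "set_integrable lborel {0<..} (\<lambda>g. D * exp (- (mu / 2) * g))"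
  proof -
    have "set_integrable lborel {0<..} (\<lambda>g. exp (- (mu / 2) * g))"
      by (rule set_integrable_subset[OF exp_int[of "mu / 2" 0]]) (use assms in auto)
    then show ?thesis by (rule set_integrable_mult_right)
  qed
  have iF: "set_integrable lborel {0<..} F"
  proof (rule set_integrable_bound[OF ib])
    show "set_borel_measurable lborel {0<..} F"
      unfolding set_borel_measurable_def using mF by measurable
    show "AE x in lborel. x \<in> {0<..} \<longrightarrow> norm (F x) \<le> norm (D * exp (- (mu / 2) * x))"
      using upper Fpos by (intro AE_I2 impI) (auto simp: abs_of_pos less_imp_le order.trans[OF _ abs_ge_self])
  qed
  have "(LINT g:{0<..}|lborel. F g) > 0"
    by (rule integral_pos[OF iF]) (auto intro: less_imp_le Fpos)
  moreover have "2 * (mu * T) powr (2 / alpha) / alpha > 0" using assms by simp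
  ultimately show ?thesis unfolding beta_fn_def F_def[symmetric] by (rule mult_pos_pos[rotated])
qed


lemma E_int:
  fixes x b c p :: real assumes "x > 0" "b > 0" "c \<ge> 0"
  shows "set_integrable lborel {0..} (\<lambda>r. exp (- pi * x * r * b - c * r powr p))"
proof (rule set_integrable_bound[OF exp_int[of "pi * x * b" 0]])
  show "0 < pi * x * b" using assms by simp
  show "set_borel_measurable lborel {0..} (\<lambda>r. exp (- pi * x * r * b - c * r powr p))"
    unfolding set_borel_measurable_def by measurable
  show "AE r in lborel. r \<in> {0..} \<longrightarrow> norm (exp (- pi * x * r * b - c * r powr p)) \<le> norm (exp (- (pi * x * b) * r))"
  proof (intro AE_I2 impI)
    fix r :: real assume "r \<in> {0..}"
    have "c * r powr p \<ge> 0" using assms by simp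
    then have "- pi * x * r * b - c * r powr p \<le> - (pi * x * b) * r" by (simp add: algebra_simps)
    then show "norm (exp (- pi * x * r * b - c * r powr p)) \<le> norm (exp (- (pi * x * b) * r))" by simp
  qed
qed

lemma rE_int:
  fixes x b c p :: real assumes "x > 0" "b > 0" "c \<ge> 0"
  shows "set_integrable lborel {0..} (\<lambda>r. r * exp (- pi * x * r * b - c * r powr p))"
proof -
  define K where "K = pi * x * b"
  have K: "K > 0" using assms by (simp add: K_def)
  have "set_integrable lborel {0..} (\<lambda>r. (2 / K) * exp (- (K / 2) * r))"
    using exp_int[of "K / 2" 0] K by (intro set_integrable_mult_right) auto
  then show ?thesis
  proof (rule set_integrable_bound)
    show "set_borel_measurable lborel {0..} (\<lambda>r. r * exp (- pi * x * r * b - c * r powr p))"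
      unfolding set_borel_measurable_def by measurable
    show "AE r in lborel. r \<in> {0..} \<longrightarrow> norm (r * exp (- pi * x * r * b - c * r powr p)) \<le> norm ((2 / K) * exp (- (K / 2) * r))"
    proof (intro AE_I2 impI)
      fix r :: real assume r: "r \<in> {0..}"
      have "c * r powr p \<ge> 0" using assms by simp
      then have "- pi * x * r * b - c * r powr p \<le> - K * r" by (simp add: algebra_simps K_def)
      then have "r * exp (- pi * x * r * b - c * r powr p) \<le> r * exp (- K * r)"
        using r by (intro mult_left_mono) auto
      also have "\<dots> \<le> (2 / K) * exp (- (K / 2) * r)" using xexp_le[OF K] r by simp
      finally show "norm (r * exp (- pi * x * r * b - c * r powr p)) \<le> norm ((2 / K) * exp (- (K / 2) * r))"
        using r K by simp
    qed
  qed
qed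

lemma E_pos:
  fixes x b c p :: real assumes "x > 0" "b > 0" "c \<ge> 0"
  shows "(LINT r:{0..}|lborel. exp (- pi * x * r * b - c * r powr p)) > 0"
  by (rule integral_pos[OF E_int[OF assms]]) auto

lemma rE_pos:
  fixes x b c p :: real assumes "x > 0" "b > 0" "c \<ge> 0"
  shows "(LINT r:{0..}|lborel. r * exp (- pi * x * r * b - c * r powr p)) > 0"
  by (rule integral_pos[OF rE_int[OF assms]]) auto

lemma E_shift:
  fixes x b c p \<delta> :: real assumes "x > 0" "b > 0" "c \<ge> 0" "\<delta> < x"
  shows "(LINT r:{0..}|lborel. exp (- pi * (x - \<delta>) * r * b - c * r powr p)) \<ge>
         (LINT r:{0..}|lborel. exp (- pi * x * r * b - c * r powr p)) +
         (pi * b * \<delta>) * (LINT r:{0..}|lborel. r * exp (- pi * x * r * b - c * r powr p))"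
proof -
  have i1: "set_integrable lborel {0..} (\<lambda>r. exp (- pi * x * r * b - c * r powr p))"
    by (rule E_int[OF assms(1-3)])
  have i2: "set_integrable lborel {0..} (\<lambda>r. (pi * b * \<delta>) * (r * exp (- pi * x * r * b - c * r powr p)))"
    by (intro set_integrable_mult_right rE_int[OF assms(1-3)])
  have i3: "set_integrable lborel {0..} (\<lambda>r. exp (- pi * (x - \<delta>) * r * b - c * r powr p))"
    by (rule E_int) (use assms in auto)
  have le: "exp (- pi * x * r * b - c * r powr p) + (pi * b * \<delta>) * (r * exp (- pi * x * r * b - c * r powr p))
      \<le> exp (- pi * (x - \<delta>) * r * b - c * r powr p)" for r
  proof -
    define e where "e = exp (- pi * x * r * b - c * r powr p)"
    define y where "y = pi * b * \<delta> * r"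
    have "- pi * (x - \<delta>) * r * b - c * r powr p = (- pi * x * r * b - c * r powr p) + y"
      unfolding y_def by (simp add: algebra_simps)
    then have eq: "exp (- pi * (x - \<delta>) * r * b - c * r powr p) = e * exp y"
      unfolding e_def by (simp only: exp_add)
    have "e * (1 + y) \<le> e * exp y"
      unfolding e_def by (rule mult_left_mono) auto
    moreover have "e + (pi * b * \<delta>) * (r * e) = e * (1 + y)"
      unfolding y_def by (simp add: algebra_simps)
    ultimately show ?thesis using eq unfolding e_def by simp
  qed
  have "(LINT r:{0..}|lborel. exp (- pi * x * r * b - c * r powr p) + (pi * b * \<delta>) * (r * exp (- pi * x * r * b - c * r powr p)))
     \<le> (LINT r:{0..}|lborel. exp (- pi * (x - \<delta>) * r * b - c * r powr p))"
    by (rule set_integral_mono[OF set_integral_add(1)[OF i1 i2] i3 le])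
  then show ?thesis using set_integral_add(2)[OF i1 i2] by simp
qed


theorem lemma1:
  fixes lam T mu sigma2 alpha a g1s :: real
  assumes "lam > 0" "T > 0" "mu > 0" "sigma2 \<ge> 0" "alpha > 2" "0 < a" "a \<le> 1"
    and "g1s \<in> {0<..<a}"
    and "\<forall>g1 \<in> {0<..<a}. DSR lam mu sigma2 T alpha a g1 \<le> DSR lam mu sigma2 T alpha a g1s"
  shows "g1s < a / 2 \<and> a / 2 < a - g1s \<and> a - g1s < a \<and> a \<le> 1"
proof -
  have g: "0 < g1s" "g1s < a" using assms(8) by auto
  have lt: "g1s < a / 2"
  proof (rule ccontr)
    assume "\<not> g1s < a / 2"
    then have ge: "g1s \<ge> a / 2" by simp
    define b where "b = beta_fn mu T alpha"
    have b: "b > 0" unfolding b_def using beta_pos assms(2,3,5) by blast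
    define c where "c = mu * T * sigma2"
    have c: "c \<ge> 0" unfolding c_def using assms(2,3,4) by simp
    define p where "p = alpha / 2"
    define I where "I = (\<lambda>x. LINT r:{0..}|lborel. exp (- pi * x * r * b - c * r powr p))"
    define J where "J = (\<lambda>x. LINT r:{0..}|lborel. r * exp (- pi * x * r * b - c * r powr p))"
    have DSR_eq: "DSR lam mu sigma2 T alpha a g = pi * lam ^ 2 * (g * (a - g)) * I (lam * g)" for g
      unfolding DSR_def p_cov_def I_def b_def c_def p_def by (simp add: power2_eq_square algebra_simps)
    define x0 where "x0 = lam * g1s"
    have x0: "x0 > 0" using assms(1) g by (simp add: x0_def)
    define I0 where "I0 = I x0"
    define J0 where "J0 = J x0"
    have I0: "I0 > 0" unfolding I0_def I_def by (rule E_pos[OF x0 b c])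
    have J0: "J0 > 0" unfolding J0_def J_def by (rule rE_pos[OF x0 b c])
    define K where "K = pi * b * lam"
    have K: "K > 0" using b assms(1) by (simp add: K_def)
    define P where "P = g1s * (a - g1s)"
    have P: "P > 0" using g by (simp add: P_def)
    define A where "A = P * K * J0"
    have A: "A > 0" using P K J0 by (simp add: A_def)
    define d where "d = min (g1s / 2) (min 1 (A / (2 * (I0 + K * J0))))"
    have IKJ: "I0 + K * J0 > 0" using I0 K J0 by (simp add: add_pos_pos)
    have d: "d > 0" "d \<le> g1s / 2" "d \<le> 1" "d \<le> A / (2 * (I0 + K * J0))"
    proof -
      show "d > 0" using g A IKJ unfolding d_def by (simp del: mult_2 add: min_def)
      show "d \<le> g1s / 2" unfolding d_def by (rule min.cobounded1)
      show "d \<le> 1" unfolding d_def using min.cobounded1 min.cobounded2 order_trans by blast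
      show "d \<le> A / (2 * (I0 + K * J0))" unfolding d_def using min.cobounded2 order_trans by blast
    qed
    define g' where "g' = g1s - d"
    have g': "0 < g'" "g' < a" using d g by (auto simp: g'_def)
    have sh: "I (x0 - lam * d) \<ge> I0 + (pi * b * (lam * d)) * J0"
      unfolding I_def I0_def J0_def J_def
      by (rule E_shift[OF x0 b c]) (use d g assms(1) in \<open>simp add: x0_def\<close>)
    have "x0 - lam * d = lam * g'" by (simp add: x0_def g'_def algebra_simps)
    define M where "M = I0 + K * d * J0"
    have IM: "I (lam * g') \<ge> M" using sh \<open>x0 - lam * d = lam * g'\<close> by (simp add: M_def K_def algebra_simps)
    have M: "M \<ge> 0" using I0 K d J0 by (simp add: M_def)
    define P' where "P' = g' * (a - g')"
    have P'pos: "P' > 0" using g' by (simp add: P'_def)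
    have P'ge: "P' \<ge> P - d ^ 2"
    proof -
      have "P' - (P - d ^ 2) = d * (2 * g1s - a)" by (simp add: P'_def P_def g'_def power2_eq_square algebra_simps)
      moreover have "d * (2 * g1s - a) \<ge> 0" using d ge by simp
      ultimately show ?thesis by linarith
    qed
    have dM: "d * M \<le> A / 2"
    proof -
      have "K * d * J0 \<le> K * 1 * J0" using K J0 d by (intro mult_right_mono mult_left_mono) auto
      then have "M \<le> I0 + K * J0" by (simp add: M_def)
      then have "d * M \<le> d * (I0 + K * J0)" using d by (intro mult_left_mono) auto
      also have "\<dots> \<le> A / (2 * (I0 + K * J0)) * (I0 + K * J0)" using d IKJ by (intro mult_right_mono) auto
      also have "\<dots> = A / 2" using IKJ by (simp add: field_simps)
      finally show ?thesis .
    qed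
    have "P' * I (lam * g') \<ge> P' * M" using IM P'pos by (intro mult_left_mono) auto
    moreover have "P' * M \<ge> (P - d ^ 2) * M" using P'ge M by (intro mult_right_mono) auto
    moreover have "(P - d ^ 2) * M = P * I0 + d * A - d * (d * M)"
      by (simp add: M_def A_def power2_eq_square algebra_simps)
    moreover have "d * (d * M) \<le> d * (A / 2)" using dM d by (intro mult_left_mono) auto
    moreover have "d * A > 0" using d A by simp
    ultimately have key: "P' * I (lam * g') > P * I0" by linarith
    have "DSR lam mu sigma2 T alpha a g' > DSR lam mu sigma2 T alpha a g1s"
    proof -
      have "pi * lam ^ 2 > 0" using assms(1) by simp
      then have "pi * lam ^ 2 * (P' * I (lam * g')) > pi * lam ^ 2 * (P * I0)"
        by (rule mult_strict_left_mono[OF key])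
      then show ?thesis unfolding DSR_eq by (simp add: P'_def P_def I0_def x0_def mult.assoc)
    qed
    moreover have "g' \<in> {0<..<a}" using g' by simp
    ultimately show False using assms(9) by force
  qed
  then show ?thesis using g assms(7) by auto
qed

end
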